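(* Let $2\le n<m$, $Q=\sum_{i\in[m]}q_i\mathrm B(\sigma_i)\in\mathbb B_m^*$ with all $q_i>0$ and $0\le\sigma_1<\cdots<\sigma_m\le1/2$, and let $D=D_Q(i_2,\dots,i_n;s_2,\dots,s_n)=\sum_{j\in[n]}p_j\mathrm B(\varepsilon_j)$ be a $2n$-P$^*$-degradation of $Q$ (so $0\le\varepsilon_1<\cdots<\varepsilon_n\le1/2$). Let $2\le k\le n$. 1. If $\varepsilon_{k-1}=0$, then $k=2$, $\sigma_1=0$, $p_1=q_1$, and the splitting pattern $(i_2,s_2)$ is $(2,q_2)$ or, equivalently, $(1,0)$ (i.e. the first block consists exactly of $q_1\mathrm B(\sigma_1)$). 2. If $\varepsilon_k=1/2$, then $k=n$, $\sigma_m=1/2$, $p_n=q_m$, and the splitting pattern $(i_n,s_n)$ is $(m-1,0)$ or, equivalently, $(m,q_m)$ (i.e. the last block consists exactly of $q_m\mathrm B(\sigma_m)$). 3. Suppose $0<\varepsilon_{k-1}<\varepsilon_k<1/2$. (a) If $s_k>0$ and $\sigma_{i_k}\le\phi(\varepsilon_{k-1},\varepsilon_k)$, then the channel $D'$ obtained from $D$ by replacing $s_k$ with $0$ (all other splitting patterns unchanged) satisfies $I(D')>I(D)$. (b) If $s_k<q_{i_k}$ and $\sigma_{i_k}\ge\phi(\varepsilon_{k-1},\varepsilon_k)$, then the channel $D''$ obtained from $D$ by replacing $s_k$ with $q_{i_k}$ satisfies $I(D'')>I(D)$.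
   Context: A BIDMC $W$ has input uniform on $\{0,1\}$, discrete output alphabet $\mathcal Y$ and transition probabilities $\Pr(y\mid x)$; its LR-profile is $P_W(\varepsilon)=\Pr\big(\mathcal L_W(y)=\varepsilon/(1-\varepsilon)\big)$ with $\mathcal L_W(\hat y)=\Pr(y=\hat y\mid x=0)/\Pr(y=\hat y\mid x=1)$, and $W\cong W'$ if LR-profiles coincide; channel identities are up to $\cong$. $W'\preccurlyeq W$ if there is a channel $T$ from the output alphabet of $W$ to that of $W'$ with $\Pr(y'\mid x'=a)=\sum_{y}\Pr(y\mid x=a)T(y'\mid y)$. $\mathrm B(\varepsilon)$ is the BSC with crossover probability $\varepsilon$; $\sum_iq_iW_i$ denotes the random switching channel (use $W_i$ with probability $q_i$ independently of the input and output the index $i$ along with the output). $\mathbb B_n$ is the set of BIDMCs equivalent to $\sum_{i\in[n]}p_i\mathrm B(\varepsilon_i)$ for a probability vector $(p_i)$ and $\varepsilon_i\in[0,1]$; $\mathbb B_n^*=\mathbb B_n\setminus\mathbb B_{n-1}$. $P_\epsilon(W)=\frac12\sum_{y}\min\{\Pr(y\mid x=0),\Pr(y\mid x=1)\}$; $I(W)$ is the symmetric capacity (mutual information between uniform input and output, base-2 logarithms); for $\sum_ip_i\mathrm B(\varepsilon_i)$ it equals $1-\sum_ip_ih(\varepsilon_i)$ with $h$ the binary entropy function. For a symmetric BIDMC $Q$ and $n\ge1$, $W$ is a $2n$-P-degradation of $Q$ if $W\in\mathbb B_n$, $W\preccurlyeq Q$ and $P_\epsilon(W)=\min\{P_\epsilon(W'):W'\in\mathbb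 B_n,\ W'\preccurlyeq Q\}$. Construction of $D_Q$: put $q_0=q_{m+1}=0$. Given integers $1\le i_2<\cdots<i_n\le m$ and reals $s_j\in[0,q_{i_j}]$, set $i_1=0$, $s_1=0$, $i_{n+1}=m+1$, $s_{n+1}=0$, and for $j\in[n]$ $$p_j=s_j+(q_{i_{j+1}}-s_{j+1})+\sum_{i_j<i<i_{j+1}}q_i,\qquad p_j\varepsilon_j=s_j\sigma_{i_j}+(q_{i_{j+1}}-s_{j+1})\sigma_{i_{j+1}}+\sum_{i_j<i<i_{j+1}}q_i\sigma_i$$ (terms with weight $0$ contribute $0$). Then $D_Q(i_2,\dots,i_n;s_2,\dots,s_n)=\sum_{j\in[n]:p_j>0}p_j\mathrm B(\varepsilon_j)$; the pairs $(i_j,s_j)$ are its splitting patterns. Such a channel is a $2n$-P$^*$-degradation of $Q$ if (i) all $p_j>0$ and $0\le\varepsilon_1<\cdots<\varepsilon_n\le1/2$; (ii) it is a $2n$-P-degradation of $Q$; (iii) for every $j\in[n]$ with $i_{j+1}=i_j+1$: if $s_j=0$ then $s_{j+1}=0$, and if $s_{j+1}=q_{i_{j+1}}$ then $s_j=q_{i_j}$. For $0<\varepsilon_1<\varepsilon_2<1/2$, $\phi(\varepsilon_1,\varepsilon_2)=\ln\big((1-\varepsilon_1)/(1-\varepsilon_2)\big)\big/\ln\big(((1-\varepsilon_1)\varepsilon_2)/((1-\varepsilon_2)\varepsilon_1)\big)$. *)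

theory Defs
  imports Complex_Main
begin

text \<open>A BIDMC is represented as W :: nat => nat => real with W x y = Pr(y | x),
  inputs x in {0,1}, outputs natural numbers (any finite output alphabet embeds into nat).\<close>

type_synonym bidmc = "nat \<Rightarrow> nat \<Rightarrow> real"

definition supp :: "bidmc \<Rightarrow> nat set" where
  "supp W = {y. W 0 y \<noteq> 0 \<or> W 1 y \<noteq> 0}"

definition is_bidmc :: "bidmc \<Rightarrow> bool" where
  "is_bidmc W \<longleftrightarrow> (\<forall>x\<in>{0,1}. \<forall>y. 0 \<le> W x y) \<and> finite (supp W)
     \<and> (\<forall>x\<in>{0,1}. sum (W x) (supp W) = 1)"

text \<open>LR-profile: P_W(e) = Pr(L_W(y) = e/(1-e)) with uniform input, e in [0,1];
  the event L_W(y) = e/(1-e) is written without division as W 0 y (1-e) = W 1 y e.\<close>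
definition lr_profile :: "bidmc \<Rightarrow> real \<Rightarrow> real" where
  "lr_profile W e = (\<Sum>y\<in>supp W. if W 0 y * (1 - e) = W 1 y * e then (W 0 y + W 1 y) / 2 else 0)"

definition chan_equiv :: "bidmc \<Rightarrow> bidmc \<Rightarrow> bool" where
  "chan_equiv W W' \<longleftrightarrow> (\<forall>e\<in>{0..1}. lr_profile W e = lr_profile W' e)"

definition degraded :: "bidmc \<Rightarrow> bidmc \<Rightarrow> bool" where
  "degraded W' W \<longleftrightarrow> (\<exists>T :: nat \<Rightarrow> nat \<Rightarrow> real.
      (\<forall>y y'. 0 \<le> T y y')
    \<and> (\<forall>y\<in>supp W. finite {y'. T y y' \<noteq> 0} \<and> sum (T y) {y'. T y y' \<noteq> 0} = 1)
    \<and> (\<forall>a\<in>{0,1}. \<forall>y'. W' a y' = (\<Sum>y\<in>supp W. W a y * T y y')))"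

text \<open>Random switching channel sum_{i in [n]} p_i B(e_i) (indices 1..n);
  output 2*i + b encodes (index i, BSC output b).\<close>
definition bsc_mix :: "nat \<Rightarrow> (nat \<Rightarrow> real) \<Rightarrow> (nat \<Rightarrow> real) \<Rightarrow> bidmc" where
  "bsc_mix n p e x y = (if 1 \<le> y div 2 \<and> y div 2 \<le> n
      then p (y div 2) * (if y mod 2 = x then 1 - e (y div 2) else e (y div 2)) else 0)"

definition prob_vec :: "nat \<Rightarrow> (nat \<Rightarrow> real) \<Rightarrow> bool" where
  "prob_vec n p \<longleftrightarrow> (\<forall>i\<in>{1..n}. 0 \<le> p i) \<and> sum p {1..n} = 1"

definition BB :: "nat \<Rightarrow> bidmc set" where
  "BB n = {W. is_bidmc W \<and> (\<exists>p e. prob_vec n p \<and> (\<forall>i\<in>{1..n}. 0 \<le> e i \<and> e i \<le> 1)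
                 \<and> chan_equiv W (bsc_mix n p e))}"

definition Pe :: "bidmc \<Rightarrow> real" where
  "Pe W = (1/2) * (\<Sum>y\<in>supp W. min (W 0 y) (W 1 y))"

definition sym_cap :: "bidmc \<Rightarrow> real" where
  "sym_cap W = (\<Sum>y\<in>supp W. \<Sum>x\<in>{0,1::nat}.
      if W x y = 0 then 0 else (1/2) * W x y * log 2 (W x y / ((W 0 y + W 1 y) / 2)))"

text \<open>2n-P-degradation (the minimum is expressed as: Pe W is a lower bound and W is feasible).\<close>
definition is_P_deg :: "nat \<Rightarrow> bidmc \<Rightarrow> bidmc \<Rightarrow> bool" where
  "is_P_deg n Q W \<longleftrightarrow> W \<in> BB n \<and> degraded W Q
     \<and> (\<forall>W'\<in>BB n. degraded W' Q \<longrightarrow> Pe W \<le> Pe W')"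

text \<open>Construction D_Q. q, sigma indexed 1..m; q_0 = q_{m+1} = 0.
  i, s are given for indices 2..n; they are extended by i_1 = 0, s_1 = 0, i_{n+1} = m+1, s_{n+1} = 0.\<close>
definition qq :: "nat \<Rightarrow> (nat \<Rightarrow> real) \<Rightarrow> nat \<Rightarrow> real" where
  "qq m q l = (if 1 \<le> l \<and> l \<le> m then q l else 0)"

definition ext_i :: "nat \<Rightarrow> nat \<Rightarrow> (nat \<Rightarrow> nat) \<Rightarrow> nat \<Rightarrow> nat" where
  "ext_i m n i j = (if j = 1 then 0 else if j = n + 1 then m + 1 else i j)"

definition ext_s :: "nat \<Rightarrow> (nat \<Rightarrow> real) \<Rightarrow> nat \<Rightarrow> real" where
  "ext_s n s j = (if j = 1 \<or> j = n + 1 then 0 else s j)"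

definition dq_p :: "nat \<Rightarrow> nat \<Rightarrow> (nat \<Rightarrow> real) \<Rightarrow> (nat \<Rightarrow> nat) \<Rightarrow> (nat \<Rightarrow> real) \<Rightarrow> nat \<Rightarrow> real" where
  "dq_p m n q i s j = ext_s n s j + (qq m q (ext_i m n i (j+1)) - ext_s n s (j+1))
      + (\<Sum>l\<in>{ext_i m n i j<..<ext_i m n i (j+1)}. qq m q l)"

definition dq_pe :: "nat \<Rightarrow> nat \<Rightarrow> (nat \<Rightarrow> real) \<Rightarrow> (nat \<Rightarrow> real) \<Rightarrow> (nat \<Rightarrow> nat) \<Rightarrow> (nat \<Rightarrow> real) \<Rightarrow> nat \<Rightarrow> real" where
  "dq_pe m n q \<sigma> i s j = ext_s n s j * \<sigma> (ext_i m n i j)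
      + (qq m q (ext_i m n i (j+1)) - ext_s n s (j+1)) * \<sigma> (ext_i m n i (j+1))
      + (\<Sum>l\<in>{ext_i m n i j<..<ext_i m n i (j+1)}. qq m q l * \<sigma> l)"

text \<open>epsilon_j = (p_j epsilon_j) / p_j (irrelevant, = 0, when p_j = 0: such components carry no weight).\<close>
definition dq_eps :: "nat \<Rightarrow> nat \<Rightarrow> (nat \<Rightarrow> real) \<Rightarrow> (nat \<Rightarrow> real) \<Rightarrow> (nat \<Rightarrow> nat) \<Rightarrow> (nat \<Rightarrow> real) \<Rightarrow> nat \<Rightarrow> real" where
  "dq_eps m n q \<sigma> i s j = dq_pe m n q \<sigma> i s j / dq_p m n q i s j"

text \<open>D_Q(i_2..i_n; s_2..s_n); components with p_j = 0 have zero weight, so up to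
  equivalence this equals the sum over j with p_j > 0.\<close>
definition DQ :: "nat \<Rightarrow> nat \<Rightarrow> (nat \<Rightarrow> real) \<Rightarrow> (nat \<Rightarrow> real) \<Rightarrow> (nat \<Rightarrow> nat) \<Rightarrow> (nat \<Rightarrow> real) \<Rightarrow> bidmc" where
  "DQ m n q \<sigma> i s = bsc_mix n (dq_p m n q i s) (dq_eps m n q \<sigma> i s)"

definition valid_split :: "nat \<Rightarrow> nat \<Rightarrow> (nat \<Rightarrow> real) \<Rightarrow> (nat \<Rightarrow> nat) \<Rightarrow> (nat \<Rightarrow> real) \<Rightarrow> bool" where
  "valid_split m n q i s \<longleftrightarrow> 1 \<le> i 2 \<and> i n \<le> m
     \<and> (\<forall>j\<in>{2..n}. \<forall>j'\<in>{2..n}. j < j' \<longrightarrow> i j < i j')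
     \<and> (\<forall>j\<in>{2..n}. 0 \<le> s j \<and> s j \<le> q (i j))"

definition is_PStar_deg :: "nat \<Rightarrow> nat \<Rightarrow> (nat \<Rightarrow> real) \<Rightarrow> (nat \<Rightarrow> real) \<Rightarrow> (nat \<Rightarrow> nat) \<Rightarrow> (nat \<Rightarrow> real) \<Rightarrow> bool" where
  "is_PStar_deg m n q \<sigma> i s \<longleftrightarrow> valid_split m n q i s
     \<and> (\<forall>j\<in>{1..n}. 0 < dq_p m n q i s j)
     \<and> 0 \<le> dq_eps m n q \<sigma> i s 1
     \<and> (\<forall>j\<in>{1..n}. \<forall>j'\<in>{1..n}. j < j' \<longrightarrow> dq_eps m n q \<sigma> i s j < dq_eps m n q \<sigma> i s j')
     \<and> dq_eps m n q \<sigma> i s n \<le> 1/2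
     \<and> is_P_deg n (bsc_mix m q \<sigma>) (DQ m n q \<sigma> i s)
     \<and> (\<forall>j\<in>{1..n}. ext_i m n i (j+1) = ext_i m n i j + 1 \<longrightarrow>
          (ext_s n s j = 0 \<longrightarrow> ext_s n s (j+1) = 0)
        \<and> (ext_s n s (j+1) = qq m q (ext_i m n i (j+1)) \<longrightarrow> ext_s n s j = qq m q (ext_i m n i j)))"

definition phi :: "real \<Rightarrow> real \<Rightarrow> real" where
  "phi e1 e2 = ln ((1 - e1) / (1 - e2)) / ln (((1 - e1) * e2) / ((1 - e2) * e1))"

end

theory Submission imports Defs begin

definition KK :: "real \<Rightarrow> real \<Rightarrow> real" where
  "KK a b = a * ln (a/(a+b)) + b * ln (b/(a+b))"

lemma term_gibbs:
  fixes a S c :: real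
  assumes "0 \<le> a" "0 < S" "0 < c"
  shows "a * ln c - a * ln (a/S) \<le> c*S - a \<and> (a \<noteq> c*S \<longrightarrow> a * ln c - a * ln (a/S) < c*S - a)"
proof (cases "a = 0")
  case True thus ?thesis using assms by simp
next
  case False
  hence a: "0 < a" using assms by simp
  have x: "0 < c*S/a" using a assms by simp
  have eq: "a * ln c - a * ln (a/S) = a * ln (c*S/a)"
    using a assms by (simp add: ln_div ln_mult algebra_simps)
  have "ln (c*S/a) \<le> c*S/a - 1" using ln_le_minus_one[OF x] .
  hence "a * ln (c*S/a) \<le> a * (c*S/a - 1)" using a by (simp add: mult_left_mono)
  moreover have "a * (c*S/a - 1) = c*S - a" using a by (simp add: field_simps)
  ultimately have le: "a * ln (c*S/a) \<le> c*S - a" by linarith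
  moreover have "a \<noteq> c*S \<longrightarrow> a * ln (c*S/a) < c*S - a"
  proof
    assume ne: "a \<noteq> c*S"
    have "c*S/a \<noteq> 1" using ne a by (auto simp: field_simps)
    hence "ln (c*S/a) \<noteq> c*S/a - 1" using ln_eq_minus_one[OF x] by blast
    hence "ln (c*S/a) < c*S/a - 1" using ln_le_minus_one[OF x] by linarith
    hence "a * ln (c*S/a) < a * (c*S/a - 1)" using a by simp
    moreover have "a * (c*S/a - 1) = c*S - a" using a by (simp add: field_simps)
    ultimately show "a * ln (c*S/a) < c*S - a" by linarith
  qed
  ultimately show ?thesis using eq by simp
qed

lemma gibbs:
  fixes a b e :: real
  assumes "0 \<le> a" "0 \<le> b" "0 < e" "e < 1"
  shows "a * ln e + b * ln (1-e) \<le> KK a b \<and> (a*(1-e) \<noteq> b*e \<longrightarrow> a * ln e + b * ln (1-e) < KK a b)"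
proof (cases "a + b = 0")
  case True
  hence "a = 0" "b = 0" using assms by auto
  thus ?thesis by (simp add: KK_def)
next
  case False
  hence S: "0 < a + b" using assms by simp
  note t1 = term_gibbs[OF assms(1) S assms(3)]
  note t2 = term_gibbs[OF assms(2) S, of "1-e"]
  have ne: "a*(1-e) \<noteq> b*e \<Longrightarrow> a \<noteq> e*(a+b)" by (auto simp: algebra_simps)
  have sum: "e*(a+b) - a + ((1-e)*(a+b) - b) = 0" by (simp add: algebra_simps)
  show ?thesis using t1 t2 ne sum assms unfolding KK_def by auto
qed

lemma KK_eq:
  assumes "0 < a + b" "e = a/(a+b)"
  shows "KK a b = a * ln e + b * ln (1-e)"
proof -
  have "b/(a+b) = 1 - e" using assms by (simp add: field_simps)
  thus ?thesis using assms by (simp add: KK_def)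
qed

lemma key_ineq:
  fixes a1 b1 a2 b2 t \<sigma> e1 e2 :: real
  assumes "0 < e1" "e1 < e2" "e2 < 1"
    "0 < a1+b1" "e1 = a1/(a1+b1)" "0 < a2+b2" "e2 = a2/(a2+b2)"
    "0 \<le> a1+t*\<sigma>" "0 \<le> b1+t*(1-\<sigma>)" "0 \<le> a2-t*\<sigma>" "0 \<le> b2-t*(1-\<sigma>)" "t \<noteq> 0"
    "0 \<le> t*(ln(1-e1) - ln(1-e2) - \<sigma>*(ln(1-e1) + ln e2 - ln(1-e2) - ln e1))"
  shows "KK a1 b1 + KK a2 b2 < KK (a1+t*\<sigma>) (b1+t*(1-\<sigma>)) + KK (a2-t*\<sigma>) (b2-t*(1-\<sigma>))"
proof -
  have e2p: "0 < e2" "e1 < 1" using assms(1,2,3) by linarith+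
  note g1 = gibbs[OF assms(8,9) assms(1) e2p(2)]
  note g2 = gibbs[OF assms(10,11) e2p(1) assms(3)]
  have k1: "KK a1 b1 = a1 * ln e1 + b1 * ln (1-e1)" using KK_eq assms by blast
  have k2: "KK a2 b2 = a2 * ln e2 + b2 * ln (1-e2)" using KK_eq assms by blast
  have a1: "a1 = e1*(a1+b1)" using assms by (simp add: field_simps)
  have a2: "a2 = e2*(a2+b2)" using assms by (simp add: field_simps)
  have d1: "(a1+t*\<sigma>)*(1-e1) - (b1+t*(1-\<sigma>))*e1 = t*(\<sigma> - e1)"
    using a1 by (simp add: algebra_simps)
  have d2: "(a2-t*\<sigma>)*(1-e2) - (b2-t*(1-\<sigma>))*e2 = - t*(\<sigma> - e2)"
    using a2 by (simp add: algebra_simps)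
  have strict: "(a1+t*\<sigma>)*(1-e1) \<noteq> (b1+t*(1-\<sigma>))*e1 \<or> (a2-t*\<sigma>)*(1-e2) \<noteq> (b2-t*(1-\<sigma>))*e2"
  proof (rule ccontr)
    assume "\<not> ?thesis"
    hence "t*(\<sigma> - e1) = 0" "t*(\<sigma> - e2) = 0" using d1 d2 by auto
    hence "\<sigma> = e1" "\<sigma> = e2" using assms(12) by auto
    thus False using assms(2) by simp
  qed
  have iden: "(a1+t*\<sigma>) * ln e1 + (b1+t*(1-\<sigma>)) * ln (1-e1) + ((a2-t*\<sigma>) * ln e2 + (b2-t*(1-\<sigma>)) * ln (1-e2))
     = KK a1 b1 + KK a2 b2 + t*(ln(1-e1) - ln(1-e2) - \<sigma>*(ln(1-e1) + ln e2 - ln(1-e2) - ln e1))"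
    unfolding k1 k2 by (simp add: algebra_simps)
  show ?thesis using g1 g2 strict iden assms(13) by linarith
qed

definition ct :: "real \<Rightarrow> real \<Rightarrow> real" where
  "ct u w = (if u = 0 then 0 else 1/2 * u * log 2 (u / w))"

definition Bv :: "real \<Rightarrow> real \<Rightarrow> real" where
  "Bv a b = ct b ((b+a)/2) + ct a ((b+a)/2) + ct a ((a+b)/2) + ct b ((a+b)/2)"

lemma sum_pairs: "(\<Sum>y\<in>{2..<2*n+2}. f y) = (\<Sum>j\<in>{1..n}. f (2*j) + f (2*j+1::nat))"
proof (induction n)
  case 0 thus ?case by simp
next
  case (Suc n)
  have e: "2*Suc n+2 = Suc (Suc (2*n+2))" by simp
  have s1: "sum f {2..<Suc (2*n+2)} = sum f {2..<2*n+2} + f (2*n+2)" by (rule sum.atLeastLessThan_Suc) simp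
  have s2: "sum f {2..<Suc (Suc (2*n+2))} = sum f {2..<Suc(2*n+2)} + f (Suc (2*n+2))" by (rule sum.atLeastLessThan_Suc) simp
  have "(\<Sum>y\<in>{2..<2*Suc n+2}. f y) = (\<Sum>y\<in>{2..<2*n+2}. f y) + (f (2*n+2) + f (Suc (2*n+2)))"
    unfolding e s2 s1 by (simp add: add.assoc)
  also have "\<dots> = (\<Sum>j\<in>{1..n}. f (2*j) + f (2*j+1)) + (f (2*Suc n) + f (2*Suc n+1))"
    using Suc by (simp add: numeral_eq_Suc)
  also have "\<dots> = (\<Sum>j\<in>{1..Suc n}. f (2*j) + f (2*j+1))" by simp
  finally show ?case .
qed

lemma sym_cap_mix:
  "sym_cap (bsc_mix n P E) = (\<Sum>j\<in>{1..n}. Bv (P j * E j) (P j * (1 - E j)))"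
proof -
  define W where "W = bsc_mix n P E"
  define T where "T y = ct (W 0 y) ((W 0 y + W 1 y)/2) + ct (W 1 y) ((W 0 y + W 1 y)/2)" for y
  have "sym_cap W = sum T (supp W)"
    unfolding sym_cap_def T_def ct_def One_nat_def by simp
  also have "\<dots> = sum T {2..<2*n+2}"
  proof (rule sum.mono_neutral_left)
    show "supp W \<subseteq> {2..<2*n+2}"
    proof
      fix y assume "y \<in> supp W"
      hence "1 \<le> y div 2 \<and> y div 2 \<le> n" unfolding supp_def W_def bsc_mix_def
        by (auto split: if_splits)
      thus "y \<in> {2..<2*n+2}" by auto
    qed
    show "\<forall>y\<in>{2..<2*n+2} - supp W. T y = 0"
      unfolding supp_def T_def ct_def by auto
  qed simp
  also have "\<dots> = (\<Sum>j\<in>{1..n}. T (2*j) + T (2*j+1))" by (rule sum_pairs)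
  also have "\<dots> = (\<Sum>j\<in>{1..n}. Bv (P j * E j) (P j * (1 - E j)))"
  proof (rule sum.cong)
    fix j assume j: "j \<in> {1..n}"
    have "T (2*j) = ct (P j * (1 - E j)) ((P j * (1 - E j) + P j * E j)/2) + ct (P j * E j) ((P j * (1 - E j) + P j * E j)/2)"
      using j unfolding T_def W_def bsc_mix_def by simp
    moreover have "T (2*j+1) = ct (P j * E j) ((P j * E j + P j * (1 - E j))/2) + ct (P j * (1 - E j)) ((P j * E j + P j * (1 - E j))/2)"
      using j unfolding T_def W_def bsc_mix_def by simp
    ultimately show "T (2*j) + T (2*j+1) = Bv (P j * E j) (P j * (1 - E j))"
      unfolding Bv_def by simp
  qed simp
  finally show ?thesis unfolding W_def .
qed

lemma ct_eq:
  fixes a b :: real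
  assumes "0 \<le> a" "0 \<le> b"
  shows "ct a ((a+b)/2) = 1/2*a + 1/2*(a*ln(a/(a+b)))/ln 2"
proof (cases "a = 0")
  case True thus ?thesis by (simp add: ct_def)
next
  case False
  hence a: "0 < a" using assms by simp
  hence ab: "0 < a + b" using assms by simp
  have eq: "a / ((a+b)/2) = 2 * (a/(a+b))" by simp
  have lnm: "ln (2 * (a/(a+b))) = ln 2 + ln (a/(a+b))" using ln_mult[of 2 "a/(a+b)"] a ab by simp
  have "log 2 (a / ((a+b)/2)) = log 2 (2 * (a/(a+b)))" by (simp only: eq)
  also have "\<dots> = ln (2 * (a/(a+b))) / ln 2" by (simp only: log_def)
  also have "\<dots> = (ln 2 + ln (a/(a+b))) / ln 2" by (simp only: lnm)
  also have "\<dots> = 1 + ln (a/(a+b)) / ln 2" by (simp add: field_simps)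
  finally show ?thesis using a by (simp add: ct_def algebra_simps)
qed

lemma Bv_eq:
  fixes a b :: real
  assumes "0 \<le> a" "0 \<le> b"
  shows "Bv a b = (a+b) + KK a b / ln 2"
proof -
  have "ct b ((b+a)/2) = 1/2*b + 1/2*(b*ln(b/(a+b)))/ln 2"
    using ct_eq[OF assms(2,1)] by (simp add: add.commute)
  moreover have "ct a ((b+a)/2) = 1/2*a + 1/2*(a*ln(a/(a+b)))/ln 2"
    using ct_eq[OF assms] by (simp add: add.commute)
  moreover have "ct b ((a+b)/2) = 1/2*b + 1/2*(b*ln(b/(a+b)))/ln 2"
    using ct_eq[OF assms(2,1)] by (simp add: add.commute)
  moreover note ct_eq[OF assms]
  ultimately show ?thesis unfolding Bv_def KK_def by (simp add: field_simps)
qed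

lemma i_range:
  assumes "valid_split m n q i s" "j \<in> {2..n}"
  shows "1 \<le> i j \<and> i j \<le> m"
proof -
  have v: "1 \<le> i 2" "i n \<le> m" "\<forall>j\<in>{2..n}. \<forall>j'\<in>{2..n}. j < j' \<longrightarrow> i j < i j'"
    using assms(1) unfolding valid_split_def by auto
  have "1 \<le> i j"
  proof (cases "j = 2")
    case False thus ?thesis using v(1) v(3) assms(2) by (metis atLeastAtMost_iff le_trans less_imp_le nat_less_le order_refl)
  qed (use v in simp)
  moreover have "i j \<le> m"
  proof (cases "j = n")
    case False thus ?thesis using v(2) v(3) assms(2) by (metis atLeastAtMost_iff le_trans less_imp_le nat_less_le order_refl)
  qed (use v in simp)
  ultimately show ?thesis by simp
qed

lemma tm:
  fixes c x :: real
  assumes "c = 0 \<or> (0 \<le> c \<and> 0 \<le> x \<and> x \<le> 1/2)"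
  shows "0 \<le> c*x \<and> c*x \<le> c/2"
  using assms
proof
  assume h: "0 \<le> c \<and> 0 \<le> x \<and> x \<le> 1/2"
  hence "c * x \<le> c * (1/2)" by (intro mult_left_mono) auto
  thus ?thesis using h by simp
qed simp

lemma pe_bounds:
  assumes vs: "valid_split m n q i s" and qpos: "\<forall>l\<in>{1..m}. 0 < q l"
    and sr: "\<forall>l\<in>{1..m}. 0 \<le> \<sigma> l \<and> \<sigma> l \<le> 1/2" and j: "j \<in> {1..n}"
  shows "0 \<le> dq_pe m n q \<sigma> i s j \<and> dq_pe m n q \<sigma> i s j \<le> dq_p m n q i s j / 2"
proof -
  define c1 where "c1 = ext_s n s j"
  define x1 where "x1 = \<sigma> (ext_i m n i j)"
  define c2 where "c2 = qq m q (ext_i m n i (j+1)) - ext_s n s (j+1)"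
  define x2 where "x2 = \<sigma> (ext_i m n i (j+1))"
  define L where "L = {ext_i m n i j<..<ext_i m n i (j+1)}"
  have sv: "\<forall>j\<in>{2..n}. 0 \<le> s j \<and> s j \<le> q (i j)" using vs unfolding valid_split_def by auto
  have t1: "0 \<le> c1*x1 \<and> c1*x1 \<le> c1/2"
  proof (rule tm)
    show "c1 = 0 \<or> (0 \<le> c1 \<and> 0 \<le> x1 \<and> x1 \<le> 1/2)"
    proof (cases "j = 1")
      case False
      hence j2: "j \<in> {2..n}" using j by auto
      hence "c1 = s j" "x1 = \<sigma> (i j)" unfolding c1_def x1_def ext_s_def ext_i_def by auto
      moreover have "1 \<le> i j \<and> i j \<le> m" using i_range[OF vs j2] .
      ultimately show ?thesis using sv sr j2 by auto
    qed (simp add: c1_def ext_s_def)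
  qed
  have t2: "0 \<le> c2*x2 \<and> c2*x2 \<le> c2/2"
  proof (rule tm)
    show "c2 = 0 \<or> (0 \<le> c2 \<and> 0 \<le> x2 \<and> x2 \<le> 1/2)"
    proof (cases "j = n")
      case True thus ?thesis by (simp add: c2_def ext_s_def ext_i_def qq_def)
    next
      case False
      hence j2: "j+1 \<in> {2..n}" using j by auto
      have ir: "1 \<le> i (j+1) \<and> i (j+1) \<le> m" using i_range[OF vs j2] .
      hence "c2 = q (i (j+1)) - s (j+1)" "x2 = \<sigma> (i (j+1))" using j2 unfolding c2_def x2_def ext_s_def ext_i_def qq_def by auto
      thus ?thesis using sv sr j2 ir by auto
    qed
  qed
  have t3: "\<forall>l. 0 \<le> qq m q l * \<sigma> l \<and> qq m q l * \<sigma> l \<le> qq m q l / 2"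
  proof
    fix l show "0 \<le> qq m q l * \<sigma> l \<and> qq m q l * \<sigma> l \<le> qq m q l / 2"
      by (rule tm) (use qpos sr in \<open>auto simp: qq_def less_imp_le\<close>)
  qed
  have s3a: "0 \<le> (\<Sum>l\<in>L. qq m q l * \<sigma> l)" using t3 by (simp add: sum_nonneg)
  have "(\<Sum>l\<in>L. qq m q l * \<sigma> l) \<le> (\<Sum>l\<in>L. qq m q l / 2)" using t3 by (simp add: sum_mono)
  hence s3b: "(\<Sum>l\<in>L. qq m q l * \<sigma> l) \<le> (\<Sum>l\<in>L. qq m q l) / 2" by (simp add: sum_divide_distrib)
  have "dq_pe m n q \<sigma> i s j = c1*x1 + c2*x2 + (\<Sum>l\<in>L. qq m q l * \<sigma> l)"
    unfolding dq_pe_def c1_def x1_def c2_def x2_def L_def by simp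
  moreover have "dq_p m n q i s j = c1 + c2 + (\<Sum>l\<in>L. qq m q l)"
    unfolding dq_p_def c1_def c2_def L_def by simp
  ultimately show ?thesis using t1 t2 s3a s3b by simp
qed

lemma symcap_DQ:
  assumes vs: "valid_split m n q i s" and qpos: "\<forall>l\<in>{1..m}. 0 < q l"
    and sr: "\<forall>l\<in>{1..m}. 0 \<le> \<sigma> l \<and> \<sigma> l \<le> 1/2"
  shows "sym_cap (DQ m n q \<sigma> i s) = (\<Sum>j\<in>{1..n}. dq_p m n q i s j
      + KK (dq_pe m n q \<sigma> i s j) (dq_p m n q i s j - dq_pe m n q \<sigma> i s j) / ln 2)"
  unfolding DQ_def sym_cap_mix
proof (rule sum.cong)
  fix j assume j: "j \<in> {1..n}"
  define P where "P = dq_p m n q i s j"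
  define A where "A = dq_pe m n q \<sigma> i s j"
  have b: "0 \<le> A \<and> A \<le> P/2" using pe_bounds[OF vs qpos sr j] unfolding A_def P_def .
  have e: "dq_eps m n q \<sigma> i s j = A / P" unfolding dq_eps_def A_def P_def ..
  have pa: "P * (A/P) = A"
  proof (cases "P = 0")
    case True thus ?thesis using b by simp
  qed simp
  have pb: "P * (1 - A/P) = P - A" using pa by (simp add: algebra_simps)
  show "Bv (dq_p m n q i s j * dq_eps m n q \<sigma> i s j) (dq_p m n q i s j * (1 - dq_eps m n q \<sigma> i s j))
     = dq_p m n q i s j + KK (dq_pe m n q \<sigma> i s j) (dq_p m n q i s j - dq_pe m n q \<sigma> i s j) / ln 2"
    unfolding e P_def[symmetric] A_def[symmetric] pa pb using Bv_eq[of A "P - A"] b by simp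
qed simp

lemma upd:
  assumes "2 \<le> k" "k \<le> n" "1 \<le> i k" "i k \<le> m"
  shows "dq_p m n q i (s(k:=v)) (k-1) = dq_p m n q i s (k-1) + (s k - v)"
    "dq_pe m n q \<sigma> i (s(k:=v)) (k-1) = dq_pe m n q \<sigma> i s (k-1) + (s k - v) * \<sigma> (i k)"
    "dq_p m n q i (s(k:=v)) k = dq_p m n q i s k - (s k - v)"
    "dq_pe m n q \<sigma> i (s(k:=v)) k = dq_pe m n q \<sigma> i s k - (s k - v) * \<sigma> (i k)"
    "j \<noteq> k-1 \<Longrightarrow> j \<noteq> k \<Longrightarrow> dq_p m n q i (s(k:=v)) j = dq_p m n q i s j"
    "j \<noteq> k-1 \<Longrightarrow> j \<noteq> k \<Longrightarrow> dq_pe m n q \<sigma> i (s(k:=v)) j = dq_pe m n q \<sigma> i s j"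
proof -
  have kk: "k - 1 + 1 = k" using assms by simp
  have ks: "ext_s n (s(k:=v)) k = v" "ext_s n s k = s k" using assms unfolding ext_s_def by auto
  have ks1: "ext_s n (s(k:=v)) (k-1) = ext_s n s (k-1)" using assms unfolding ext_s_def by auto
  have ks2: "ext_s n (s(k:=v)) (k+1) = ext_s n s (k+1)" using assms unfolding ext_s_def by auto
  have ik: "ext_i m n i k = i k" using assms unfolding ext_i_def by auto
  have qk: "qq m q (i k) = q (i k)" using assms unfolding qq_def by auto
  show "dq_p m n q i (s(k:=v)) (k-1) = dq_p m n q i s (k-1) + (s k - v)"
    unfolding dq_p_def kk ks ks1 ik by simp
  show "dq_pe m n q \<sigma> i (s(k:=v)) (k-1) = dq_pe m n q \<sigma> i s (k-1) + (s k - v) * \<sigma> (i k)"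
    unfolding dq_pe_def kk ks ks1 ik by (simp add: algebra_simps)
  show "dq_p m n q i (s(k:=v)) k = dq_p m n q i s k - (s k - v)"
    unfolding dq_p_def ks ks2 ik by simp
  show "dq_pe m n q \<sigma> i (s(k:=v)) k = dq_pe m n q \<sigma> i s k - (s k - v) * \<sigma> (i k)"
    unfolding dq_pe_def ks ks2 ik by (simp add: algebra_simps)
  assume "j \<noteq> k-1" "j \<noteq> k"
  hence "j + 1 \<noteq> k" "j \<noteq> k" using assms by auto
  hence e: "ext_s n (s(k:=v)) j = ext_s n s j" "ext_s n (s(k:=v)) (j+1) = ext_s n s (j+1)"
    unfolding ext_s_def by auto
  show "dq_p m n q i (s(k:=v)) j = dq_p m n q i s j" unfolding dq_p_def e ..
  show "dq_pe m n q \<sigma> i (s(k:=v)) j = dq_pe m n q \<sigma> i s j" unfolding dq_pe_def e ..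
qed

lemma sum_diff2:
  fixes f g :: "nat \<Rightarrow> real"
  assumes "finite A" "a \<in> A" "b \<in> A" "a \<noteq> b" "\<forall>j\<in>A. j \<noteq> a \<longrightarrow> j \<noteq> b \<longrightarrow> g j = f j"
  shows "sum g A - sum f A = (g a - f a) + (g b - f b)"
proof -
  have "sum g A - sum f A = (\<Sum>j\<in>A. g j - f j)" by (simp add: sum_subtractf)
  also have "\<dots> = (\<Sum>j\<in>{a,b}. g j - f j)"
    by (rule sum.mono_neutral_right) (use assms in auto)
  also have "\<dots> = (g a - f a) + (g b - f b)" using assms by simp
  finally show ?thesis .
qed

lemma phi_eq:
  fixes e1 e2 :: real
  assumes "0 < e1" "e1 < e2" "e2 < 1"
  shows "phi e1 e2 = (ln(1-e1) - ln(1-e2)) / (ln(1-e1) + ln e2 - ln(1-e2) - ln e1)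
     \<and> 0 < ln(1-e1) + ln e2 - ln(1-e2) - ln e1"
proof -
  have p: "0 < 1-e1" "0 < 1-e2" "0 < e2" using assms by auto
  have M: "ln ((1-e1)/(1-e2)) = ln(1-e1) - ln(1-e2)" using p by (simp add: ln_div)
  have L: "ln (((1-e1)*e2)/((1-e2)*e1)) = ln(1-e1) + ln e2 - ln(1-e2) - ln e1"
    using p assms(1) by (simp add: ln_div ln_mult)
  have "(1-e2)*e1 < (1-e1)*e2" using assms by (simp add: algebra_simps)
  hence "1 < ((1-e1)*e2)/((1-e2)*e1)" using p assms(1) by simp
  hence "0 < ln (((1-e1)*e2)/((1-e2)*e1))" by simp
  thus ?thesis unfolding phi_def M L by simp
qed

lemma part3:
  assumes vs: "valid_split m n q i s" and qpos: "\<forall>l\<in>{1..m}. 0 < q l"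
    and sr: "\<forall>l\<in>{1..m}. 0 \<le> \<sigma> l \<and> \<sigma> l \<le> 1/2"
    and k: "2 \<le> k" "k \<le> n"
    and ppos: "\<forall>j\<in>{1..n}. 0 < dq_p m n q i s j"
    and e: "0 < dq_eps m n q \<sigma> i s (k-1)" "dq_eps m n q \<sigma> i s (k-1) < dq_eps m n q \<sigma> i s k"
       "dq_eps m n q \<sigma> i s k < 1"
    and vs': "valid_split m n q i (s(k:=v))"
    and t: "s k - v \<noteq> 0"
    and hyp: "0 \<le> (s k - v) * (ln(1 - dq_eps m n q \<sigma> i s (k-1)) - ln(1 - dq_eps m n q \<sigma> i s k)
        - \<sigma> (i k) * (ln(1 - dq_eps m n q \<sigma> i s (k-1)) + ln (dq_eps m n q \<sigma> i s k)
        - ln(1 - dq_eps m n q \<sigma> i s k) - ln (dq_eps m n q \<sigma> i s (k-1))))"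
  shows "sym_cap (DQ m n q \<sigma> i (s(k:=v))) > sym_cap (DQ m n q \<sigma> i s)"
proof -
  have ik: "1 \<le> i k \<and> i k \<le> m" using i_range[OF vs] k by auto
  have ik1: "1 \<le> i k" "i k \<le> m" using ik by auto
  note u = upd[where k=k and n=n and i=i and m=m and q=q and s=s and v=v, OF k ik1]
  define s' where "s' = s(k:=v)"
  define f where "f j = dq_p m n q i s j + KK (dq_pe m n q \<sigma> i s j) (dq_p m n q i s j - dq_pe m n q \<sigma> i s j) / ln 2" for j
  define g where "g j = dq_p m n q i s' j + KK (dq_pe m n q \<sigma> i s' j) (dq_p m n q i s' j - dq_pe m n q \<sigma> i s' j) / ln 2" for j
  have S: "sym_cap (DQ m n q \<sigma> i s) = sum f {1..n}" unfolding f_def using symcap_DQ[OF vs qpos sr] .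
  have S': "sym_cap (DQ m n q \<sigma> i s') = sum g {1..n}" unfolding g_def s'_def using symcap_DQ[OF vs' qpos sr] .
  have k1: "k-1 \<in> {1..n}" "k \<in> {1..n}" "k-1 \<noteq> k" using k by auto
  have D: "sum g {1..n} - sum f {1..n} = (g (k-1) - f (k-1)) + (g k - f k)"
    by (rule sum_diff2) (use k1 u(5,6) in \<open>auto simp: f_def g_def s'_def\<close>)
  define t where "t = s k - v"
  define x where "x = \<sigma> (i k)"
  define P1 where "P1 = dq_p m n q i s (k-1)"
  define A1 where "A1 = dq_pe m n q \<sigma> i s (k-1)"
  define P2 where "P2 = dq_p m n q i s k"
  define A2 where "A2 = dq_pe m n q \<sigma> i s k"
  define e1 where "e1 = dq_eps m n q \<sigma> i s (k-1)"
  define e2 where "e2 = dq_eps m n q \<sigma> i s k"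
  have g1: "g (k-1) = (P1 + t) + KK (A1 + t*x) ((P1 - A1) + t*(1-x)) / ln 2"
    unfolding g_def s'_def u(1,2) P1_def A1_def t_def x_def by (simp add: algebra_simps)
  have g2: "g k = (P2 - t) + KK (A2 - t*x) ((P2 - A2) - t*(1-x)) / ln 2"
    unfolding g_def s'_def u(3,4) P2_def A2_def t_def x_def by (simp add: algebra_simps)
  have f1: "f (k-1) = P1 + KK A1 (P1 - A1) / ln 2" unfolding f_def P1_def A1_def ..
  have f2: "f k = P2 + KK A2 (P2 - A2) / ln 2" unfolding f_def P2_def A2_def ..
  have b1: "0 \<le> A1 + t*x \<and> A1 + t*x \<le> (P1 + t)/2"
    using pe_bounds[OF vs' qpos sr k1(1)] unfolding u(1,2) P1_def A1_def t_def x_def .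
  have b2: "0 \<le> A2 - t*x \<and> A2 - t*x \<le> (P2 - t)/2"
    using pe_bounds[OF vs' qpos sr k1(2)] unfolding u(3,4) P2_def A2_def t_def x_def .
  have pp: "0 < P1" "0 < P2" using ppos k1 unfolding P1_def P2_def by auto
  have ee: "e1 = A1 / (A1 + (P1 - A1))" "e2 = A2 / (A2 + (P2 - A2))"
    unfolding e1_def e2_def A1_def A2_def P1_def P2_def dq_eps_def by simp_all
  have ki: "KK A1 (P1 - A1) + KK A2 (P2 - A2) < KK (A1 + t*x) ((P1 - A1) + t*(1-x)) + KK (A2 - t*x) ((P2 - A2) - t*(1-x))"
  proof (rule key_ineq)
    show "0 < e1" "e1 < e2" "e2 < 1" using e unfolding e1_def e2_def by auto
    show "0 < A1 + (P1 - A1)" "0 < A2 + (P2 - A2)" using pp by auto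
    show "e1 = A1 / (A1 + (P1 - A1))" "e2 = A2 / (A2 + (P2 - A2))" by (rule ee)+
    show "0 \<le> A1 + t*x" "0 \<le> A2 - t*x" using b1 b2 by auto
    show "0 \<le> (P1 - A1) + t*(1-x)" "0 \<le> (P2 - A2) - t*(1-x)" using b1 b2 by (auto simp: algebra_simps)
    show "t \<noteq> 0" using t unfolding t_def .
    show "0 \<le> t * (ln (1 - e1) - ln (1 - e2) - x * (ln (1 - e1) + ln e2 - ln (1 - e2) - ln e1))"
      using hyp unfolding t_def x_def e1_def e2_def .
  qed
  have "0 < ln (2::real)" by simp
  hence "0 < (KK (A1 + t*x) ((P1 - A1) + t*(1-x)) + KK (A2 - t*x) ((P2 - A2) - t*(1-x)) - (KK A1 (P1 - A1) + KK A2 (P2 - A2))) / ln 2"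
    using ki by simp
  moreover have "(g (k-1) - f (k-1)) + (g k - f k) = (KK (A1 + t*x) ((P1 - A1) + t*(1-x)) + KK (A2 - t*x) ((P2 - A2) - t*(1-x)) - (KK A1 (P1 - A1) + KK A2 (P2 - A2))) / ln 2"
    unfolding g1 g2 f1 f2 by (simp add: field_simps)
  ultimately show ?thesis using S S' D unfolding s'_def by linarith
qed
theorem lemma8:
  fixes m n k :: nat and q \<sigma> :: "nat \<Rightarrow> real" and i :: "nat \<Rightarrow> nat" and s :: "nat \<Rightarrow> real"
  assumes "2 \<le> n" and "n < m"
    and "\<forall>l\<in>{1..m}. 0 < q l" and "sum q {1..m} = 1"
    and "0 \<le> \<sigma> 1" and "\<forall>l\<in>{1..m}. \<forall>l'\<in>{1..m}. l < l' \<longrightarrow> \<sigma> l < \<sigma> l'" and "\<sigma> m \<le> 1/2"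
    and "bsc_mix m q \<sigma> \<in> BB m - BB (m - 1)"
    and "is_PStar_deg m n q \<sigma> i s"
    and "2 \<le> k" and "k \<le> n"
  shows
    "(dq_eps m n q \<sigma> i s (k - 1) = 0 \<longrightarrow>
        k = 2 \<and> \<sigma> 1 = 0 \<and> dq_p m n q i s 1 = q 1
        \<and> ((i 2 = 2 \<and> s 2 = q 2) \<or> (i 2 = 1 \<and> s 2 = 0)))
   \<and> (dq_eps m n q \<sigma> i s k = 1/2 \<longrightarrow>
        k = n \<and> \<sigma> m = 1/2 \<and> dq_p m n q i s n = q m
        \<and> ((i n = m - 1 \<and> s n = 0) \<or> (i n = m \<and> s n = q m)))
   \<and> (0 < dq_eps m n q \<sigma> i s (k - 1) \<and> dq_eps m n q \<sigma> i s (k - 1) < dq_eps m n q \<sigma> i s k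
        \<and> dq_eps m n q \<sigma> i s k < 1/2 \<longrightarrow>
        (0 < s k \<and> \<sigma> (i k) \<le> phi (dq_eps m n q \<sigma> i s (k - 1)) (dq_eps m n q \<sigma> i s k) \<longrightarrow>
           sym_cap (DQ m n q \<sigma> i (s(k := 0))) > sym_cap (DQ m n q \<sigma> i s))
      \<and> (s k < q (i k) \<and> \<sigma> (i k) \<ge> phi (dq_eps m n q \<sigma> i s (k - 1)) (dq_eps m n q \<sigma> i s k) \<longrightarrow>
           sym_cap (DQ m n q \<sigma> i (s(k := q (i k)))) > sym_cap (DQ m n q \<sigma> i s)))"
  proof -
  note P = assms(9)[unfolded is_PStar_deg_def]
  have vs: "valid_split m n q i s" using P by blast
  have ppos: "\<forall>j\<in>{1..n}. 0 < dq_p m n q i s j" using P by blast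
  have e1nn: "0 \<le> dq_eps m n q \<sigma> i s 1" using P by blast
  have emono: "\<forall>j\<in>{1..n}. \<forall>j'\<in>{1..n}. j < j' \<longrightarrow> dq_eps m n q \<sigma> i s j < dq_eps m n q \<sigma> i s j'" using P by blast
  have enle: "dq_eps m n q \<sigma> i s n \<le> 1/2" using P by blast
  have c3: "\<forall>j\<in>{1..n}. ext_i m n i (j+1) = ext_i m n i j + 1 \<longrightarrow>
          (ext_s n s j = 0 \<longrightarrow> ext_s n s (j+1) = 0)
        \<and> (ext_s n s (j+1) = qq m q (ext_i m n i (j+1)) \<longrightarrow> ext_s n s j = qq m q (ext_i m n i j))"
    using P by blast
  have qpos: "\<forall>l\<in>{1..m}. 0 < q l" using assms(3) .
  have smono: "\<And>l l'. l \<in> {1..m} \<Longrightarrow> l' \<in> {1..m} \<Longrightarrow> l < l' \<Longrightarrow> \<sigma> l < \<sigma> l'" using assms(6) by blast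
  have sr: "\<forall>l\<in>{1..m}. 0 \<le> \<sigma> l \<and> \<sigma> l \<le> 1/2"
  proof
    fix l assume l: "l \<in> {1..m}"
    have "\<sigma> 1 \<le> \<sigma> l" using smono[of 1 l] l by (cases "l = 1") auto
    moreover have "\<sigma> l \<le> \<sigma> m" using smono[of l m] l by (cases "l = m") auto
    ultimately show "0 \<le> \<sigma> l \<and> \<sigma> l \<le> 1/2" using assms(5,7) by auto
  qed
  have sv: "\<forall>j\<in>{2..n}. 0 \<le> s j \<and> s j \<le> q (i j)" using vs unfolding valid_split_def by auto
  have n2: "2 \<le> n" "n < m" "2 \<le> k" "k \<le> n" using assms by auto
  have epsA: "\<And>j. j \<in> {1..n} \<Longrightarrow> dq_eps m n q \<sigma> i s j = dq_pe m n q \<sigma> i s j / dq_p m n q i s j"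
    unfolding dq_eps_def by simp
  have part1: "dq_eps m n q \<sigma> i s (k - 1) = 0 \<longrightarrow>
        k = 2 \<and> \<sigma> 1 = 0 \<and> dq_p m n q i s 1 = q 1
        \<and> ((i 2 = 2 \<and> s 2 = q 2) \<or> (i 2 = 1 \<and> s 2 = 0))"
  proof
    assume h: "dq_eps m n q \<sigma> i s (k - 1) = 0"
    have k2: "k = 2"
    proof (rule ccontr)
      assume "k \<noteq> 2"
      hence "1 \<in> {1..n}" "k-1 \<in> {1..n}" "1 < k-1" using n2 by auto
      hence "dq_eps m n q \<sigma> i s 1 < dq_eps m n q \<sigma> i s (k-1)" using emono by blast
      thus False using h e1nn by simp
    qed
    have "dq_eps m n q \<sigma> i s 1 = 0" using h k2 by simp
    moreover have "0 < dq_p m n q i s 1" using ppos n2 by auto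
    ultimately have A0: "dq_pe m n q \<sigma> i s 1 = 0" unfolding dq_eps_def by simp
    have ir: "1 \<le> i 2 \<and> i 2 \<le> m" using i_range[OF vs] n2 by auto
    have s2: "0 \<le> s 2 \<and> s 2 \<le> q (i 2)" using sv n2 by auto
    have ex: "ext_i m n i 1 = 0" "ext_i m n i 2 = i 2" "ext_s n s 1 = 0" "ext_s n s 2 = s 2"
      using n2 unfolding ext_i_def ext_s_def by auto
    have qi2: "qq m q (i 2) = q (i 2)" using ir unfolding qq_def by auto
    have Aeq: "dq_pe m n q \<sigma> i s 1 = (q (i 2) - s 2) * \<sigma> (i 2) + (\<Sum>l\<in>{0<..<i 2}. qq m q l * \<sigma> l)"
      unfolding dq_pe_def one_add_one ex qi2 by simp
    have Peq: "dq_p m n q i s 1 = (q (i 2) - s 2) + (\<Sum>l\<in>{0<..<i 2}. qq m q l)"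
      unfolding dq_p_def one_add_one ex qi2 by simp
    have t1: "0 \<le> (q (i 2) - s 2) * \<sigma> (i 2)" using s2 sr ir by auto
    have tl: "\<forall>l. 0 \<le> qq m q l * \<sigma> l"
    proof
      fix l show "0 \<le> qq m q l * \<sigma> l"
      proof (cases "1 \<le> l \<and> l \<le> m")
        case True
        hence "0 \<le> q l" "0 \<le> \<sigma> l" using sr qpos by (auto simp: less_imp_le)
        thus ?thesis using True unfolding qq_def by simp
      next
        case False thus ?thesis unfolding qq_def by auto
      qed
    qed
    consider "i 2 = 1" | "i 2 = 2" | "3 \<le> i 2" using ir by linarith
    thus "k = 2 \<and> \<sigma> 1 = 0 \<and> dq_p m n q i s 1 = q 1
        \<and> ((i 2 = 2 \<and> s 2 = q 2) \<or> (i 2 = 1 \<and> s 2 = 0))"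
    proof cases
      case 1
      have "ext_i m n i 2 = ext_i m n i 1 + 1" using ex 1 by simp
      moreover have "1 \<in> {1..n}" using n2 by simp
      ultimately have "s 2 = 0" using c3[rule_format, of 1, unfolded one_add_one] ex by auto
      moreover have "{0<..<i 2} = {}" using 1 by auto
      ultimately have z: "q 1 * \<sigma> 1 = 0" "dq_p m n q i s 1 = q 1" using Aeq Peq A0 1 by auto
      have "0 < q 1" using qpos n2 by auto
      hence "\<sigma> 1 = 0" using z(1) by simp
      thus ?thesis using k2 \<open>s 2 = 0\<close> 1 \<open>dq_p m n q i s 1 = q 1\<close> by simp
    next
      case 2
      have "{0<..<i 2} = {1}" using 2 by auto
      hence Aeq': "dq_pe m n q \<sigma> i s 1 = (q (i 2) - s 2) * \<sigma> (i 2) + q 1 * \<sigma> 1"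
        and Peq': "dq_p m n q i s 1 = (q (i 2) - s 2) + q 1"
        using Aeq Peq n2 unfolding qq_def by auto
      have "0 \<le> q 1 * \<sigma> 1" using tl[rule_format, of 1] n2 unfolding qq_def by auto
      hence z: "q 1 * \<sigma> 1 = 0" "(q (i 2) - s 2) * \<sigma> (i 2) = 0" using t1 A0 Aeq' by linarith+
      have "0 < q 1" using qpos n2 by auto
      hence s10: "\<sigma> 1 = 0" using z(1) by simp
      have "\<sigma> 1 < \<sigma> 2" using smono[of 1 2] n2 by auto
      hence "s 2 = q 2" using z(2) 2 s10 by auto
      thus ?thesis using k2 s10 2 Peq' by simp
    next
      case 3
      have mem: "2 \<in> {0<..<i 2}" using 3 by auto
      have "qq m q 2 * \<sigma> 2 \<le> (\<Sum>l\<in>{0<..<i 2}. qq m q l * \<sigma> l)"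
        by (rule member_le_sum) (use mem tl in auto)
      moreover have "0 < qq m q 2 * \<sigma> 2"
      proof -
        have "\<sigma> 1 < \<sigma> 2" using smono[of 1 2] n2 by auto
        hence "0 < \<sigma> 2" using assms(5) by simp
        moreover have "0 < qq m q 2" using qpos n2 unfolding qq_def by auto
        ultimately show ?thesis by simp
      qed
      ultimately have False using A0 Aeq t1 by linarith
      thus ?thesis ..
    qed
  qed
  have part2: "dq_eps m n q \<sigma> i s k = 1/2 \<longrightarrow>
        k = n \<and> \<sigma> m = 1/2 \<and> dq_p m n q i s n = q m
        \<and> ((i n = m - 1 \<and> s n = 0) \<or> (i n = m \<and> s n = q m))"
  proof
    assume h: "dq_eps m n q \<sigma> i s k = 1/2"
    have kn: "k = n"
    proof (rule ccontr)
      assume "k \<noteq> n"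
      hence "k \<in> {1..n}" "n \<in> {1..n}" "k < n" using n2 by auto
      hence "dq_eps m n q \<sigma> i s k < dq_eps m n q \<sigma> i s n" using emono by blast
      thus False using h enle by simp
    qed
    have "dq_eps m n q \<sigma> i s n = 1/2" using h kn by simp
    moreover have Ppos: "0 < dq_p m n q i s n" using ppos n2 by auto
    ultimately have A0: "dq_pe m n q \<sigma> i s n = dq_p m n q i s n / 2" unfolding dq_eps_def
      by (simp add: field_simps)
    have ir: "1 \<le> i n \<and> i n \<le> m" using i_range[OF vs] n2 by auto
    have sn: "0 \<le> s n \<and> s n \<le> q (i n)" using sv n2 by auto
    have ex: "ext_i m n i n = i n" "ext_i m n i (n+1) = m+1" "ext_s n s n = s n" "ext_s n s (n+1) = 0"
      "qq m q (m+1) = 0"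
      using n2 unfolding ext_i_def ext_s_def qq_def by auto
    define L where "L = {i n<..<m+1}"
    have Aeq: "dq_pe m n q \<sigma> i s n = s n * \<sigma> (i n) + (\<Sum>l\<in>L. qq m q l * \<sigma> l)"
      unfolding dq_pe_def ex L_def by simp
    have Peq: "dq_p m n q i s n = s n + (\<Sum>l\<in>L. qq m q l)"
      unfolding dq_p_def ex L_def by simp
    have D: "(s n / 2 - s n * \<sigma> (i n)) + (\<Sum>l\<in>L. qq m q l / 2 - qq m q l * \<sigma> l) = 0"
    proof -
      have e1: "(\<Sum>l\<in>L. qq m q l / 2 - qq m q l * \<sigma> l) = (\<Sum>l\<in>L. qq m q l)/2 - (\<Sum>l\<in>L. qq m q l * \<sigma> l)"
        by (simp add: sum_subtractf sum_divide_distrib)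
      show ?thesis using A0 unfolding Aeq Peq e1 add_divide_distrib by linarith
    qed
    have t1: "0 \<le> s n / 2 - s n * \<sigma> (i n)"
    proof -
      have "s n * \<sigma> (i n) \<le> s n * (1/2)" using sn sr ir by (intro mult_left_mono) auto
      thus ?thesis by simp
    qed
    have tl: "\<forall>l. 0 \<le> qq m q l / 2 - qq m q l * \<sigma> l"
    proof
      fix l show "0 \<le> qq m q l / 2 - qq m q l * \<sigma> l"
      proof (cases "1 \<le> l \<and> l \<le> m")
        case True
        hence "0 \<le> q l" "\<sigma> l \<le> 1/2" using sr qpos by (auto simp: less_imp_le)
        hence "q l * \<sigma> l \<le> q l * (1/2)" by (intro mult_left_mono) auto
        thus ?thesis using True unfolding qq_def by simp
      next
        case False thus ?thesis unfolding qq_def by auto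
      qed
    qed
    have sm: "\<sigma> (m-1) < \<sigma> m" using smono[of "m-1" m] n2 by auto
    have qm: "0 < q m" "0 < q (m-1)" using qpos n2 by auto
    consider "i n = m" | "i n = m - 1" | "i n < m - 1" using ir by linarith
    thus "k = n \<and> \<sigma> m = 1/2 \<and> dq_p m n q i s n = q m
        \<and> ((i n = m - 1 \<and> s n = 0) \<or> (i n = m \<and> s n = q m))"
    proof cases
      case 1
      have "ext_i m n i (n+1) = ext_i m n i n + 1" using ex 1 by simp
      moreover have "n \<in> {1..n}" using n2 by simp
      moreover have "ext_s n s (n+1) = qq m q (ext_i m n i (n+1))" using ex by simp
      ultimately have "ext_s n s n = qq m q (ext_i m n i n)" using c3 by blast
      hence snq: "s n = q m" using ex 1 n2 unfolding qq_def by simp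
      have Le: "L = {}" unfolding L_def using 1 by auto
      have "q m / 2 - q m * \<sigma> m = 0" using D snq 1 unfolding Le by simp
      hence "\<sigma> m = 1/2" using qm by (simp add: field_simps)
      thus ?thesis using kn snq 1 Peq Le by simp
    next
      case 2
      have Le: "L = {m}" unfolding L_def using 2 n2 by auto
      have qqm: "qq m q m = q m" unfolding qq_def using n2 by simp
      have D2: "(s n / 2 - s n * \<sigma> (m-1)) + (q m / 2 - q m * \<sigma> m) = 0" using D 2 qqm unfolding Le by simp
      have "0 \<le> q m / 2 - q m * \<sigma> m" using tl[rule_format, of m] qqm by simp
      moreover have "0 \<le> s n / 2 - s n * \<sigma> (m-1)" using t1 2 by simp
      ultimately have z: "s n / 2 - s n * \<sigma> (m-1) = 0" "q m / 2 - q m * \<sigma> m = 0" using D2 by linarith+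
      have "\<sigma> m = 1/2" using z(2) qm by (simp add: field_simps)
      hence "\<sigma> (m-1) < 1/2" using sm by simp
      hence "s n = 0" using z(1) by (simp add: field_simps)
      thus ?thesis using kn 2 Peq Le qqm \<open>\<sigma> m = 1/2\<close> by simp
    next
      case 3
      have mem: "m-1 \<in> L" unfolding L_def using 3 by auto
      have "qq m q (m-1) / 2 - qq m q (m-1) * \<sigma> (m-1) \<le> (\<Sum>l\<in>L. qq m q l / 2 - qq m q l * \<sigma> l)"
        by (rule member_le_sum) (use mem tl in \<open>auto simp: L_def\<close>)
      moreover have "0 < qq m q (m-1) / 2 - qq m q (m-1) * \<sigma> (m-1)"
      proof -
        have "\<sigma> (m-1) < 1/2" using sm assms(7) by simp
        hence "q (m-1) * \<sigma> (m-1) < q (m-1) * (1/2)" using qm by simp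
        moreover have "1 \<le> m-1" using n2 by linarith
        hence "qq m q (m-1) = q (m-1)" unfolding qq_def by simp
        ultimately show ?thesis by simp
      qed
      ultimately have False using D t1 by linarith
      thus ?thesis ..
    qed
  qed
  have part3: "0 < dq_eps m n q \<sigma> i s (k - 1) \<and> dq_eps m n q \<sigma> i s (k - 1) < dq_eps m n q \<sigma> i s k
        \<and> dq_eps m n q \<sigma> i s k < 1/2 \<longrightarrow>
        (0 < s k \<and> \<sigma> (i k) \<le> phi (dq_eps m n q \<sigma> i s (k - 1)) (dq_eps m n q \<sigma> i s k) \<longrightarrow>
           sym_cap (DQ m n q \<sigma> i (s(k := 0))) > sym_cap (DQ m n q \<sigma> i s))
      \<and> (s k < q (i k) \<and> \<sigma> (i k) \<ge> phi (dq_eps m n q \<sigma> i s (k - 1)) (dq_eps m n q \<sigma> i s k) \<longrightarrow>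
           sym_cap (DQ m n q \<sigma> i (s(k := q (i k)))) > sym_cap (DQ m n q \<sigma> i s))"
  proof
    assume h: "0 < dq_eps m n q \<sigma> i s (k - 1) \<and> dq_eps m n q \<sigma> i s (k - 1) < dq_eps m n q \<sigma> i s k
        \<and> dq_eps m n q \<sigma> i s k < 1/2"
    define e1 where "e1 = dq_eps m n q \<sigma> i s (k - 1)"
    define e2 where "e2 = dq_eps m n q \<sigma> i s k"
    define M where "M = ln(1-e1) - ln(1-e2)"
    define L where "L = ln(1-e1) + ln e2 - ln(1-e2) - ln e1"
    have ee: "0 < e1" "e1 < e2" "e2 < 1" using h unfolding e1_def e2_def by auto
    have ph: "phi e1 e2 = M / L" "0 < L" using phi_eq[OF ee] unfolding M_def L_def by auto
    have ik: "1 \<le> i k \<and> i k \<le> m" using i_range[OF vs] n2 by auto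
    have qik: "0 < q (i k)" using qpos ik by auto
    have skr: "0 \<le> s k \<and> s k \<le> q (i k)" using sv n2 by auto
    have vsv: "\<And>v. 0 \<le> v \<Longrightarrow> v \<le> q (i k) \<Longrightarrow> valid_split m n q i (s(k:=v))"
      using vs unfolding valid_split_def by auto
    show "(0 < s k \<and> \<sigma> (i k) \<le> phi e1 e2 \<longrightarrow>
           sym_cap (DQ m n q \<sigma> i (s(k := 0))) > sym_cap (DQ m n q \<sigma> i s))
      \<and> (s k < q (i k) \<and> \<sigma> (i k) \<ge> phi e1 e2 \<longrightarrow>
           sym_cap (DQ m n q \<sigma> i (s(k := q (i k)))) > sym_cap (DQ m n q \<sigma> i s))"
    proof (intro conjI impI)
      assume a: "0 < s k \<and> \<sigma> (i k) \<le> phi e1 e2"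
      have "\<sigma> (i k) * L \<le> M" using a ph by (simp add: pos_le_divide_eq)
      hence hyp: "0 \<le> (s k - 0) * (M - \<sigma> (i k) * L)" using a by simp
      show "sym_cap (DQ m n q \<sigma> i (s(k := 0))) > sym_cap (DQ m n q \<sigma> i s)"
        by (rule part3[OF vs qpos sr n2(3,4) ppos _ _ _ vsv])
           (use h hyp a qik in \<open>auto simp: e1_def e2_def M_def L_def\<close>)
    next
      assume a: "s k < q (i k) \<and> \<sigma> (i k) \<ge> phi e1 e2"
      have "M \<le> \<sigma> (i k) * L" using a ph by (simp add: pos_divide_le_eq)
      hence hyp: "0 \<le> (s k - q (i k)) * (M - \<sigma> (i k) * L)" using a
        by (intro mult_nonpos_nonpos) auto
      show "sym_cap (DQ m n q \<sigma> i (s(k := q (i k)))) > sym_cap (DQ m n q \<sigma> i s)"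
        by (rule part3[OF vs qpos sr n2(3,4) ppos _ _ _ vsv])
           (use h hyp a qik in \<open>auto simp: e1_def e2_def M_def L_def\<close>)
    qed
  qed
  show ?thesis using part1 part2 part3 by blast
qed

end
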